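(* Let $q\ge 2$ and $n\ge 1$ be integers, and let $[q]=\{0,1,\dots,q-1\}$. For every nonempty set $S\subseteq [q]^n$ one has $$|\Delta(S)|\ \ge\ \frac{\log |S|}{2\log(2nq)}.$$
   Context: For $x=(x_1,\dots,x_n),y=(y_1,\dots,y_n)\in[q]^n$, the Hamming distance is $d_H(x,y)=\#\{i: x_i\neq y_i\}$. For a set $S$, $\Delta(S)=\{d_H(x,y): x,y\in S\}$ is the set of Hamming distances determined by $S$ (pairs with $x=y$ allowed, so $0\in\Delta(S)$). Logarithms are to any fixed base greater than 1 (the bound is a ratio of logarithms). *)

theory Defs
  imports "HOL-Analysis.Analysis" "HOL-Library.FuncSet"
begin

text \<open>Words of length n over [q] = {0..<q}, as functions on {0..<n} (extensional: value undefined outside).\<close>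
definition words :: "nat \<Rightarrow> nat \<Rightarrow> (nat \<Rightarrow> nat) set" where
  "words q n = PiE {0..<n} (\<lambda>_. {0..<q})"

definition hamming :: "nat \<Rightarrow> (nat \<Rightarrow> nat) \<Rightarrow> (nat \<Rightarrow> nat) \<Rightarrow> nat" where
  "hamming n x y = card {i \<in> {0..<n}. x i \<noteq> y i}"

definition dist_set :: "nat \<Rightarrow> (nat \<Rightarrow> nat) set \<Rightarrow> nat set" where
  "dist_set n S = {hamming n x y | x y. x \<in> S \<and> y \<in> S}"

end

theory Submission imports Defs "HOL-Library.Function_Algebras" begin

definition fscale :: "real \<Rightarrow> ('a \<Rightarrow> real) \<Rightarrow> ('a \<Rightarrow> real)" where
  "fscale c f = (\<lambda>x. c * f x)"

interpretation fv: vector_space "fscale :: real \<Rightarrow> ('a \<Rightarrow> real) \<Rightarrow> _"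
  by unfold_locales (auto simp: fscale_def fun_eq_iff algebra_simps)

lemma span_mult_lin:
  assumes "h \<in> fv.span A" and "\<And>a. a \<in> A \<Longrightarrow> a * e \<in> fv.span C"
  shows "h * e \<in> fv.span C"
  using assms(1)
proof (induction rule: fv.span_induct_alt)
  case base then show ?case by (metis mult_zero_left fv.span_zero)
next
  case (step c x y)
  have "(fscale c x + y) * e = fscale c (x * e) + y * e"
    by (simp add: fscale_def fun_eq_iff algebra_simps)
  then show ?case using step assms(2) fv.span_add fv.span_scale by metis
qed

lemma fsum_apply: "(\<Sum>i\<in>A. (f i :: 'a \<Rightarrow> real)) y = (\<Sum>i\<in>A. f i y)"
  by (induction A rule: infinite_finite_induct) auto

definition ee :: "nat \<Rightarrow> nat \<Rightarrow> (nat \<Rightarrow> nat) \<Rightarrow> real" where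
  "ee i a = (\<lambda>y. if y i = a then 1 else 0)"

definition gg :: "(nat \<times> nat) set \<Rightarrow> (nat \<Rightarrow> nat) \<Rightarrow> real" where
  "gg P = (\<lambda>y. \<Prod>p\<in>P. (if y (fst p) = snd p then 1 else 0))"

definition BB :: "nat \<Rightarrow> nat \<Rightarrow> nat \<Rightarrow> ((nat \<Rightarrow> nat) \<Rightarrow> real) set" where
  "BB n q k = gg ` {P. P \<subseteq> {0..<n} \<times> {0..<q} \<and> card P \<le> k}"

lemma gg_mult:
  assumes "finite P"
  shows "gg P * ee (fst p) (snd p) = gg (insert p P)"
proof (cases "p \<in> P")
  case True
  then have "gg P y * ee (fst p) (snd p) y = gg P y" for y
    using assms by (auto simp: gg_def ee_def prod_zero_iff)
  then show ?thesis using True by (auto simp: fun_eq_iff insert_absorb)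
next
  case False
  then show ?thesis using assms by (auto simp: fun_eq_iff gg_def ee_def)
qed

lemma BB_mono: "k \<le> k' \<Longrightarrow> BB n q k \<subseteq> BB n q k'"
  unfolding BB_def by auto

lemma span_step:
  assumes "h \<in> fv.span (BB n q k)" and "i < n" and "a < q"
  shows "h * ee i a \<in> fv.span (BB n q (Suc k))"
proof (rule span_mult_lin[OF assms(1)])
  fix b assume "b \<in> BB n q k"
  then obtain P where P: "P \<subseteq> {0..<n} \<times> {0..<q}" "card P \<le> k" "b = gg P"
    unfolding BB_def by auto
  have fin: "finite P" using P(1) finite_subset by blast
  have "b * ee i a = gg (insert (i,a) P)" using gg_mult[OF fin, of "(i,a)"] P by simp
  moreover have "card (insert (i,a) P) \<le> Suc k" using P fin by (simp add: card_insert_if)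
  moreover have "insert (i,a) P \<subseteq> {0..<n} \<times> {0..<q}" using P assms by auto
  ultimately have "b * ee i a \<in> BB n q (Suc k)" unfolding BB_def by blast
  then show "b * ee i a \<in> fv.span (BB n q (Suc k))" by (rule fv.span_base)
qed

lemma ham_real:
  "real (hamming n x y) = real n - (\<Sum>i<n. ee i (x i) y)"
proof -
  have "real (hamming n x y) = (\<Sum>i<n. (1 - ee i (x i) y))"
  proof -
    have "(\<Sum>i<n. (1 - ee i (x i) y)) = (\<Sum>i\<in>{i \<in> {0..<n}. x i \<noteq> y i}. 1)"
      by (rule sum.mono_neutral_cong_right) (auto simp: ee_def)
    then show ?thesis by (simp add: hamming_def)
  qed
  also have "\<dots> = real n - (\<Sum>i<n. ee i (x i) y)"
    by (simp add: sum_subtractf)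
  finally show ?thesis .
qed

lemma prod_span:
  assumes "finite T" and "x \<in> words q n"
  shows "(\<lambda>y. \<Prod>\<delta>\<in>T. (\<delta> - real (hamming n x y))) \<in> fv.span (BB n q (card T))"
  using assms(1)
proof (induction T rule: finite_induct)
  case empty
  have "gg {} \<in> BB n q 0" unfolding BB_def by auto
  moreover have "gg {} = (\<lambda>y. \<Prod>\<delta>\<in>{}. (\<delta> - real (hamming n x y)))"
    by (simp add: gg_def)
  ultimately show ?case using fv.span_base by fastforce
next
  case (insert t T)
  let ?h = "(\<lambda>y. \<Prod>\<delta>\<in>T. (\<delta> - real (hamming n x y)))"
  have xi: "i < n \<Longrightarrow> x i < q" for i using assms(2) by (auto simp: words_def PiE_iff)
  have eq: "(\<lambda>y. \<Prod>\<delta>\<in>insert t T. (\<delta> - real (hamming n x y)))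
     = fscale (t - real n) ?h + (\<Sum>i<n. ?h * ee i (x i))"
    using insert(1,2)
    by (simp add: fun_eq_iff fscale_def ham_real algebra_simps sum_distrib_left sum_distrib_right fsum_apply)
  have h1: "?h \<in> fv.span (BB n q (Suc (card T)))"
    using insert(3) fv.span_mono[OF BB_mono[of "card T" "Suc (card T)"]] by auto
  have h2: "?h * ee i (x i) \<in> fv.span (BB n q (Suc (card T)))" if "i < n" for i
    using span_step[OF insert(3) that xi[OF that]] .
  have "fscale (t - real n) ?h + (\<Sum>i<n. ?h * ee i (x i)) \<in> fv.span (BB n q (Suc (card T)))"
    using h1 h2 by (intro fv.span_add fv.span_scale fv.span_sum) auto
  then show ?case using eq insert(1,2) by simp
qed

lemma suc_le_pow2: "Suc k \<le> 2 ^ k"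
  by (induction k) auto

lemma geom_bound:
  assumes "N \<ge> (1::nat)"
  shows "(\<Sum>i\<le>k. N ^ i) \<le> (2 * N) ^ (2 * Suc k)"
proof -
  have "(\<Sum>i\<le>k. N ^ i) \<le> (\<Sum>i\<le>k. N ^ k)"
    by (rule sum_mono) (use assms in \<open>auto intro: power_increasing\<close>)
  also have "\<dots> = Suc k * N ^ k" by simp
  also have "\<dots> \<le> 2 ^ k * N ^ k" by (rule mult_right_mono[OF suc_le_pow2]) simp
  also have "\<dots> = (2 * N) ^ k" by (simp add: power_mult_distrib)
  also have "\<dots> \<le> (2 * N) ^ (2 * Suc k)"
    by (rule power_increasing) (use assms in auto)
  finally show ?thesis .
qed

lemma card_BB:
  "card (BB n q k) \<le> (\<Sum>i\<le>k. (n*q) ^ i)"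
proof -
  let ?A = "{0..<n} \<times> {0..<q}"
  have "{P. P \<subseteq> ?A \<and> card P \<le> k} \<subseteq> set ` {xs. set xs \<subseteq> ?A \<and> length xs \<le> k}"
  proof
    fix P assume P: "P \<in> {P. P \<subseteq> ?A \<and> card P \<le> k}"
    then have "finite P" using finite_subset by blast
    then obtain xs where "set xs = P" "distinct xs" using finite_distinct_list by blast
    then show "P \<in> set ` {xs. set xs \<subseteq> ?A \<and> length xs \<le> k}"
      using P distinct_card[of xs] by auto
  qed
  then have "card {P. P \<subseteq> ?A \<and> card P \<le> k} \<le> card (set ` {xs. set xs \<subseteq> ?A \<and> length xs \<le> k})"
    by (intro card_mono finite_imageI) (auto intro: finite_lists_length_le)
  also have "\<dots> \<le> card {xs. set xs \<subseteq> ?A \<and> length xs \<le> k}" by (rule card_image_le) (auto intro: finite_lists_length_le)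
  also have "\<dots> = (\<Sum>i\<le>k. (n*q) ^ i)" by (subst card_lists_length_le) auto
  finally have "card {P. P \<subseteq> ?A \<and> card P \<le> k} \<le> (\<Sum>i\<le>k. (n*q) ^ i)" .
  moreover have "card (BB n q k) \<le> card {P. P \<subseteq> ?A \<and> card P \<le> k}"
    unfolding BB_def by (rule card_image_le) auto
  ultimately show ?thesis by linarith
qed

lemma finite_BB: "finite (BB n q k)"
  unfolding BB_def by (rule finite_imageI) auto

lemma ham_le: "hamming n x y \<le> n"
  unfolding hamming_def by (metis (no_types, lifting) card_atLeastLessThan card_mono diff_zero finite_atLeastLessThan mem_Collect_eq subsetI)

lemma ham_pos:
  assumes "x \<in> words q n" "y \<in> words q n" "x \<noteq> y"
  shows "hamming n x y \<noteq> 0"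
proof -
  obtain i where i: "x i \<noteq> y i" using assms(3) by auto
  have "i < n"
  proof (rule ccontr)
    assume "\<not> i < n"
    then have "x i = y i" using assms(1,2) by (auto simp: words_def PiE_def extensional_def)
    then show False using i by simp
  qed
  then have "{i \<in> {0..<n}. x i \<noteq> y i} \<noteq> {}" using i by auto
  then show ?thesis unfolding hamming_def by simp
qed

theorem theorem1p2:
  fixes q n :: nat and S :: "(nat \<Rightarrow> nat) set"
  assumes "q \<ge> 2" and "n \<ge> 1"
    and "S \<subseteq> words q n" and "S \<noteq> {}"
  shows "real (card (dist_set n S)) \<ge> ln (real (card S)) / (2 * ln (2 * real n * real q))"
proof -
  define D where "D = dist_set n S"
  have finD: "finite D" unfolding D_def dist_set_def
    by (rule finite_subset[of _ "{0..n}"]) (auto simp: ham_le)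
  have D0: "0 \<in> D" using assms(4) unfolding D_def dist_set_def hamming_def by auto
  define D' where "D' = real ` (D - {0})"
  have finD': "finite D'" using finD D'_def by auto
  have cardD': "card D' = card D - 1"
    unfolding D'_def by (subst card_image) (auto simp: inj_on_def finD D0)
  have "card D > 0" using D0 finD card_gt_0_iff by blast
  then have cardD: "card D = Suc (card D')" using cardD' by simp
  define f where "f x = (\<lambda>y. \<Prod>\<delta>\<in>D'. (\<delta> - real (hamming n x y)))" for x
  have "finite (words q n)" unfolding words_def by (intro finite_PiE) auto
  then have finS: "finite S" using assms(3) finite_subset by blast
  have fxx: "f x x \<noteq> 0" if "x \<in> S" for x
    unfolding f_def hamming_def using finD' by (auto simp: D'_def)
  have fxy: "f x y = 0" if "x \<in> S" "y \<in> S" "x \<noteq> y" for x y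
  proof -
    have "hamming n x y \<in> D - {0}" using that ham_pos assms(3) unfolding D_def dist_set_def by blast
    then have "real (hamming n x y) \<in> D'" unfolding D'_def by blast
    then show ?thesis unfolding f_def using finD' by (auto intro!: prod_zero)
  qed
  have inj: "inj_on f S"
    by (rule inj_onI) (metis fxx fxy)
  have indep: "fv.independent (f ` S)"
    unfolding fv.independent_explicit_finite_subsets
  proof (intro allI impI ballI)
    fix T u v assume T: "T \<subseteq> f ` S" "finite T" and sum0: "(\<Sum>v\<in>T. fscale (u v) v) = 0" and v: "v \<in> T"
    obtain x where x: "x \<in> S" "v = f x" using T v by auto
    have "0 = (\<Sum>w\<in>T. fscale (u w) w) x" using sum0 by simp
    also have "\<dots> = (\<Sum>w\<in>T. u w * w x)" by (simp add: fsum_apply fscale_def)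
    also have "\<dots> = u v * v x"
    proof (rule sum.remove[OF T(2) v, THEN trans], simp, rule sum.neutral, intro ballI)
      fix w assume w: "w \<in> T - {v}"
      then obtain y where "y \<in> S" "w = f y" using T by auto
      then show "u w * w x = 0" using fxy[of y x] x w by auto
    qed
    finally show "u v = 0" using fxx x by simp
  qed
  have sp: "f ` S \<subseteq> fv.span (BB n q (card D'))"
    using prod_span[OF finD'] assms(3) unfolding f_def by auto
  have "card (f ` S) \<le> card (BB n q (card D'))"
    using fv.independent_span_bound[OF finite_BB indep sp] by simp
  then have "card S \<le> card (BB n q (card D'))" using card_image[OF inj] by simp
  also have "\<dots> \<le> (\<Sum>i\<le>card D'. (n*q) ^ i)" by (rule card_BB)
  also have "\<dots> \<le> (2 * (n*q)) ^ (2 * card D)"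
    unfolding cardD by (rule geom_bound) (use assms(1,2) in simp)
  finally have cS: "card S \<le> (2 * (n*q)) ^ (2 * card D)" .
  have cpos: "card S > 0" using finS assms(4) by (simp add: card_gt_0_iff)
  have Lpos: "ln (2 * real n * real q) > 0"
  proof -
    have "real n * real q \<ge> 1 * 2" using assms(1,2) by (intro mult_mono) auto
    then show ?thesis by simp
  qed
  have cSr: "real (card S) \<le> real ((2 * (n*q)) ^ (2 * card D))"
    using cS by (simp only: of_nat_le_iff)
  have cposr: "0 < real (card S)" using cpos by (simp only: of_nat_0_less_iff)
  have "ln (real (card S)) \<le> ln (real ((2 * (n*q)) ^ (2 * card D)))"
    using ln_le_cancel_iff[of "real (card S)" "real ((2 * (n*q)) ^ (2 * card D))"] cSr cposr
    by linarith
  also have "\<dots> = ln ((2 * real n * real q) ^ (2 * card D))"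
    by (simp add: mult.assoc)
  also have "\<dots> = real (2 * card D) * ln (2 * real n * real q)"
    by (rule ln_realpow)
  finally have "ln (real (card S)) \<le> real (card D) * (2 * ln (2 * real n * real q))" by simp
  then show ?thesis using Lpos unfolding D_def by (simp add: divide_le_eq mult.commute)
qed

end
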